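(* Let $X=(X_1,\dots,X_p)$ be a jointly continuous random vector in $\mathbb{R}^p$ and let $a_1,\dots,a_{\mathcal{R}}$ be rationally independent real numbers. Let $\mathcal{L}=\{X_ia_j:1\le i\le p,1\le j\le\mathcal{R}\}$ (viewed as a family of $p\mathcal{R}$ reals). Then $$\mathbb{P}(\mathcal{L}\text{ is rationally independent})=1.$$
   Context: A random vector in $\mathbb{R}^p$ is jointly continuous if it has a joint density with respect to Lebesgue measure. A finite family of reals $(x_k)$ is rationally independent if $\sum_kq_kx_k=0$ with $q_k\in\mathbb{Q}$ implies all $q_k=0$. *)

theory Defs
  imports "HOL-Probability.Probability"
begin

definition rationally_independent :: "('i::finite \<Rightarrow> real) \<Rightarrow> bool" where
  "rationally_independent x \<longleftrightarrow>
     (\<forall>q :: 'i \<Rightarrow> real. (\<forall>k. q k \<in> \<rat>) \<and> (\<Sum>k\<in>UNIV. q k * x k) = 0 \<longrightarrow> (\<forall>k. q k = 0))"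

definition jointly_continuous :: "'a measure \<Rightarrow> ('a \<Rightarrow> real ^ 'p) \<Rightarrow> bool" where
  "jointly_continuous M X \<longleftrightarrow> (\<exists>f. distributed M lborel X f)"

end

theory Submission
  imports Defs "HOL-Library.Countable"
begin

lemma hyper_null:
  fixes c :: "real ^ 'p"
  assumes "c \<noteq> 0"
  shows "{x. c \<bullet> x = 0} \<in> null_sets lborel"
proof -
  have b: "{x. c \<bullet> x = 0} \<in> sets lborel"
    unfolding sets_lborel by (rule borel_closed[OF closed_hyperplane])
  have "negligible {x. c \<bullet> x = 0}" using assms by (intro negligible_hyperplane) simp
  then show ?thesis using b
    by (simp add: null_sets_completion_iff negligible_iff_null_sets)
qed

definition cvec :: "('r::finite \<Rightarrow> real) \<Rightarrow> ('p \<times> 'r \<Rightarrow> real) \<Rightarrow> real ^ 'p::finite" where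
  "cvec a q = (\<chi> i. \<Sum>j\<in>UNIV. q (i, j) * a j)"

lemma sum_eq_inner:
  fixes x :: "real ^ 'p" and a :: "'r::finite \<Rightarrow> real"
  shows "(\<Sum>k\<in>UNIV. q k * (case k of (i, j) \<Rightarrow> x $ i * a j)) = cvec a q \<bullet> x"
proof -
  have "(\<Sum>k\<in>UNIV. q k * (case k of (i, j) \<Rightarrow> x $ i * a j))
      = (\<Sum>i\<in>UNIV. \<Sum>j\<in>UNIV. q (i, j) * (x $ i * a j))"
    by (simp add: sum.cartesian_product case_prod_unfold flip: UNIV_Times_UNIV)
  also have "\<dots> = (\<Sum>i\<in>UNIV. (\<Sum>j\<in>UNIV. q (i, j) * a j) * x $ i)"
    by (intro sum.cong refl) (subst sum_distrib_right, simp add: mult_ac)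
  also have "\<dots> = cvec a q \<bullet> x"
    by (simp add: cvec_def inner_vec_def)
  finally show ?thesis .
qed

lemma cvec_nz:
  fixes a :: "'r::finite \<Rightarrow> real"
  assumes "rationally_independent a" "\<forall>k. q k \<in> \<rat>" "\<exists>k. q k \<noteq> 0"
  shows "(cvec a q :: real ^ 'p::finite) \<noteq> 0"
proof
  assume h: "(cvec a q :: real ^ 'p) = 0"
  have z: "q (i, j) = 0" for i j
  proof -
    have "(\<Sum>j\<in>UNIV. q (i, j) * a j) = (cvec a q :: real ^ 'p) $ i"
      unfolding cvec_def by (rule vec_lambda_beta[symmetric])
    also have "\<dots> = 0" unfolding h by (rule zero_index)
    finally have s0: "(\<Sum>j\<in>UNIV. q (i, j) * a j) = 0" .
    have r: "\<forall>j. q (i, j) \<in> \<rat>" using assms(2) by blast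
    have "\<forall>k. q (i, k) = 0"
      using spec[OF assms(1)[unfolded rationally_independent_def], of "\<lambda>j. q (i, j)"] s0 r
      by blast
    then show ?thesis by blast
  qed
  from assms(3) obtain k where "q k \<noteq> 0" by blast
  moreover obtain i j where "k = (i, j)" by (cases k)
  ultimately show False using z by blast
qed

theorem lemma5:
  fixes M :: "'a measure"
    and X :: "'a \<Rightarrow> real ^ 'p"
    and a :: "'r::finite \<Rightarrow> real"
  assumes "prob_space M"
    and "jointly_continuous M X"
    and "rationally_independent a"
  shows "{\<omega> \<in> space M. rationally_independent (\<lambda>(i::'p, j::'r). X \<omega> $ i * a j)} \<in> sets M
    \<and> measure M {\<omega> \<in> space M. rationally_independent (\<lambda>(i::'p, j::'r). X \<omega> $ i * a j)} = 1"
proof -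
  interpret prob_space M by fact
  obtain f where d: "distributed M lborel X f" using assms(2) jointly_continuous_def by blast
  have Xm: "X \<in> measurable M lborel" and fm: "f \<in> borel_measurable lborel"
    and dd: "distr M lborel X = density lborel f"
    using d by (auto simp: distributed_def)
  define Q where "Q = {q :: 'p \<times> 'r \<Rightarrow> real. (\<forall>k. q k \<in> \<rat>) \<and> (\<exists>k. q k \<noteq> 0)}"
  have "Q \<subseteq> range (\<lambda>g :: 'p \<times> 'r \<Rightarrow> rat. \<lambda>k. of_rat (g k))"
  proof
    fix q assume "q \<in> Q"
    then have "\<forall>k. \<exists>r. q k = of_rat r" by (auto simp: Q_def Rats_def)
    then obtain g where "\<forall>k. q k = of_rat (g k)" by metis
    then have "q = (\<lambda>k. of_rat (g k))" by (simp add: fun_eq_iff)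
    then show "q \<in> range (\<lambda>g :: 'p \<times> 'r \<Rightarrow> rat. \<lambda>k. of_rat (g k))" by blast
  qed
  then have cQ: "countable Q" by (rule countable_subset) simp
  define B where "B = (\<Union>q\<in>Q. {x :: real ^ 'p. cvec a q \<bullet> x = 0})"
  have Bnull: "B \<in> null_sets lborel"
    unfolding B_def using cQ
  proof (intro null_sets_UN')
    fix q assume "q \<in> Q"
    from \<open>q \<in> Q\<close> have q1: "\<forall>k. q k \<in> \<rat>" and q2: "\<exists>k. q k \<noteq> 0"
      unfolding Q_def by simp_all
    have "cvec a q \<noteq> (0 :: real ^ 'p)" by (rule cvec_nz[OF assms(3) q1 q2])
    then show "{x :: real ^ 'p. cvec a q \<bullet> x = 0} \<in> null_sets lborel"
      by (rule hyper_null)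
  qed
  have Beq: "\<not> rationally_independent (\<lambda>(i::'p, j::'r). x $ i * a j) \<longleftrightarrow> x \<in> B" for x
  proof -
    have "\<not> rationally_independent (\<lambda>(i::'p, j::'r). x $ i * a j) \<longleftrightarrow>
      (\<exists>q::'p\<times>'r\<Rightarrow>real. (\<forall>k. q k \<in> \<rat>) \<and> (\<Sum>k\<in>UNIV. q k * (case k of (i, j) \<Rightarrow> x $ i * a j)) = 0 \<and> (\<exists>k. q k \<noteq> 0))"
      unfolding rationally_independent_def by blast
    also have "\<dots> \<longleftrightarrow> (\<exists>q\<in>Q. cvec a q \<bullet> x = 0)"
      unfolding sum_eq_inner Q_def by blast
    finally show ?thesis unfolding B_def by blast
  qed
  have G: "{\<omega> \<in> space M. rationally_independent (\<lambda>(i::'p, j::'r). X \<omega> $ i * a j)}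
      = space M - (X -` B \<inter> space M)" using Beq by blast
  have Bs: "B \<in> sets lborel" using Bnull by auto
  have XB: "X -` B \<inter> space M \<in> sets M" using Xm Bs by (rule measurable_sets)
  have "emeasure M (X -` B \<inter> space M) = emeasure (distr M lborel X) B"
    using Xm Bs by (simp add: emeasure_distr)
  also have "\<dots> = 0" unfolding dd
  proof -
    have "AE x in lborel. x \<notin> B" by (rule AE_not_in[OF Bnull])
    then have "AE x in lborel. x \<in> B \<longrightarrow> f x = 0" by (rule AE_mp) simp
    then have "B \<in> null_sets (density lborel f)"
      using Bs by (simp add: null_sets_density_iff[OF fm])
    then show "emeasure (density lborel f) B = 0" by (rule null_setsD1)
  qed
  finally have "measure M (X -` B \<inter> space M) = 0" by (simp add: measure_def)
  then show ?thesis unfolding G using XB prob_compl[OF XB] by simp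
qed

end
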